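(* Let $\delta_\ell=94/194$. Let $G=(V,E)$ be an $(n-4)$-regular graph on $n>4$ nodes in which every clique has at most $\delta_\ell n$ nodes. Let $\emptyset\ne V'\subseteq V$ with $|V'|=tn$ and $0<t\le 1/2$. Then $$\mathsf M(V')\le\frac{2\delta_\ell-\tfrac12}{n-4}.$$
   Context: For a finite simple undirected graph $G=(V,E)$ with $m=|E|\ge1$ edges, degrees $d_v$, and $a_{u,v}=1$ if $\{u,v\}\in E$ and $0$ otherwise: for $C\subseteq V$, $\mathsf M(C)=\frac{1}{2m}\sum_{u\in C}\sum_{v\in C}\big(a_{u,v}-\frac{d_ud_v}{2m}\big)$, the sum over all ordered pairs including $u=v$. *)

theory Defs
  imports Complex_Main
begin

definition simple_graph :: "'a set \<Rightarrow> 'a set set \<Rightarrow> bool" where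
  "simple_graph V E \<longleftrightarrow> finite V \<and> (\<forall>e\<in>E. e \<subseteq> V \<and> card e = 2)"

definition adj :: "'a set set \<Rightarrow> 'a \<Rightarrow> 'a \<Rightarrow> real" where
  "adj E u v = (if {u, v} \<in> E then 1 else 0)"

definition degree :: "'a set set \<Rightarrow> 'a \<Rightarrow> nat" where
  "degree E v = card {e \<in> E. v \<in> e}"

definition regular :: "'a set \<Rightarrow> 'a set set \<Rightarrow> nat \<Rightarrow> bool" where
  "regular V E k \<longleftrightarrow> (\<forall>v\<in>V. degree E v = k)"

definition clique :: "'a set \<Rightarrow> 'a set set \<Rightarrow> 'a set \<Rightarrow> bool" where
  "clique V E C \<longleftrightarrow> C \<subseteq> V \<and> (\<forall>u\<in>C. \<forall>v\<in>C. u \<noteq> v \<longrightarrow> {u, v} \<in> E)"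

definition modularity :: "'a set set \<Rightarrow> 'a set \<Rightarrow> real" where
  "modularity E C = (let m = real (card E) in
     (1 / (2 * m)) * (\<Sum>u\<in>C. \<Sum>v\<in>C. adj E u v - real (degree E u) * real (degree E v) / (2 * m)))"

definition delta_l :: real where "delta_l = 94 / 194"

end

theory Submission
  imports Defs
begin

lemma handshake:
  assumes "simple_graph V E"
  shows "(\<Sum>v\<in>V. degree E v) = 2 * card E"
proof -
  have fV: "finite V" using assms by (simp add: simple_graph_def)
  have EV: "E \<subseteq> Pow V" using assms by (auto simp: simple_graph_def)
  have fE: "finite E" using EV fV by (meson finite_Pow_iff finite_subset)
  have "(\<Sum>v\<in>V. degree E v) = (\<Sum>v\<in>V. \<Sum>e\<in>E. if v \<in> e then 1 else 0)"
    unfolding degree_def using fE by (simp add: sum.If_cases Int_def conj_commute)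
  also have "\<dots> = (\<Sum>e\<in>E. \<Sum>v\<in>V. if v \<in> e then 1 else 0)" by (rule sum.swap)
  also have "\<dots> = (\<Sum>e\<in>E. card e)"
  proof (rule sum.cong)
    fix e assume "e \<in> E"
    then have "e \<subseteq> V" using EV by auto
    then have "V \<inter> e = e" by auto
    then show "(\<Sum>v\<in>V. if v \<in> e then 1 else 0) = card e"
      using fV by (simp add: sum.If_cases Int_def)
  qed simp
  also have "\<dots> = (\<Sum>e\<in>E. 2)"
    using assms by (intro sum.cong) (auto simp: simple_graph_def)
  finally show ?thesis by simp
qed

lemma nonedge_count:
  assumes "finite W" and cl: "\<And>C. C \<subseteq> W \<Longrightarrow> (\<forall>u\<in>C. \<forall>v\<in>C. u \<noteq> v \<longrightarrow> {u, v} \<in> E) \<Longrightarrow> real (card C) \<le> B"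
  shows "2 * (real (card W) - B) \<le> real (card {p \<in> W \<times> W. fst p \<noteq> snd p \<and> {fst p, snd p} \<notin> E})"
proof -
  let ?P = "{p \<in> W \<times> W. fst p \<noteq> snd p \<and> {fst p, snd p} \<notin> E}"
  obtain \<phi> :: "'a \<Rightarrow> nat" where inj: "inj_on \<phi> W"
    using assms(1) by (meson finite_imp_inj_to_nat_seg)
  define L where "L = {p \<in> ?P. \<phi> (fst p) < \<phi> (snd p)}"
  have fP: "finite ?P" using assms(1) by auto
  have fL: "finite L" unfolding L_def using fP by (rule rev_finite_subset) auto
  have Peq: "?P = L \<union> (\<lambda>(a,b). (b,a)) ` L"
  proof
    show "?P \<subseteq> L \<union> (\<lambda>(a,b). (b,a)) ` L"
    proof
      fix p assume p: "p \<in> ?P"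
      obtain a b where ab: "p = (a,b)" by force
      have "a \<noteq> b" "a \<in> W" "b \<in> W" using p ab by auto
      then have "\<phi> a \<noteq> \<phi> b" using inj by (meson inj_on_def)
      then consider "\<phi> a < \<phi> b" | "\<phi> b < \<phi> a" by linarith
      then show "p \<in> L \<union> (\<lambda>(a,b). (b,a)) ` L"
      proof cases
        case 1 then show ?thesis using p ab by (auto simp: L_def)
      next
        case 2
        have "(b,a) \<in> L" using p ab 2 by (auto simp: L_def insert_commute)
        then have "(\<lambda>(a,b). (b,a)) (b,a) \<in> (\<lambda>(a,b). (b,a)) ` L" by blast
        then show ?thesis using ab by auto
      qed
    qed
    show "L \<union> (\<lambda>(a,b). (b,a)) ` L \<subseteq> ?P"
      by (auto simp: L_def insert_commute)
  qed
  have disj: "L \<inter> (\<lambda>(a,b). (b,a)) ` L = {}" by (auto simp: L_def)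
  have injs: "inj_on (\<lambda>(a,b). (b,a)) L" by (auto simp: inj_on_def)
  have cP: "card ?P = 2 * card L"
    using Peq card_Un_disjoint[OF fL _ disj] fL card_image[OF injs] by simp
  define C where "C = W - fst ` L"
  have "C \<subseteq> W" unfolding C_def by auto
  moreover have "\<forall>u\<in>C. \<forall>v\<in>C. u \<noteq> v \<longrightarrow> {u, v} \<in> E"
  proof (intro ballI impI)
    fix u v assume u: "u \<in> C" and v: "v \<in> C" and uv: "u \<noteq> v"
    show "{u, v} \<in> E"
    proof (rule ccontr)
      assume ne: "{u, v} \<notin> E"
      have "\<phi> u \<noteq> \<phi> v" using inj u v uv unfolding C_def by (meson DiffD1 inj_on_def)
      then consider "\<phi> u < \<phi> v" | "\<phi> v < \<phi> u" by linarith
      then show False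
      proof cases
        case 1
        then have "(u,v) \<in> L" using u v uv ne by (auto simp: L_def C_def)
        then have "u \<in> fst ` L" by force
        then show False using u by (auto simp: C_def)
      next
        case 2
        then have "(v,u) \<in> L" using u v uv ne by (auto simp: L_def C_def insert_commute)
        then have "v \<in> fst ` L" by force
        then show False using v by (auto simp: C_def)
      qed
    qed
  qed
  ultimately have cC: "real (card C) \<le> B" using cl by blast
  have "card W \<le> card C + card (fst ` L)"
    unfolding C_def by (metis Diff_partition Un_Diff_cancel card_Un_le le_trans sup_commute card_mono assms(1) Un_upper1 finite_Un finite_imageI fL finite_Diff order_refl)
  moreover have "card (fst ` L) \<le> card L" using fL by (rule card_image_le)
  ultimately have "card W \<le> card C + card L" by linarith
  then have "real (card W) \<le> real (card C) + real (card L)" by linarith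
  then show ?thesis using cP cC by simp
qed


theorem lemma5:
  fixes V :: "'a set" and E :: "'a set set" and V' :: "'a set" and n :: nat and t :: real
  assumes "simple_graph V E"
    and "n = card V" and "n > 4"
    and "regular V E (n - 4)"
    and "\<forall>C. clique V E C \<longrightarrow> real (card C) \<le> delta_l * real n"
    and "V' \<noteq> {}" and "V' \<subseteq> V"
    and "real (card V') = t * real n" and "0 < t" and "t \<le> 1 / 2"
  shows "modularity E V' \<le> (2 * delta_l - 1 / 2) / (real n - 4)"
proof -
  have fV: "finite V" using assms(1) by (simp add: simple_graph_def)
  have fW: "finite V'" using fV assms(7) by (rule finite_subset[rotated])
  have hs: "(\<Sum>v\<in>V. degree E v) = 2 * card E" by (rule handshake[OF assms(1)])
  also have "(\<Sum>v\<in>V. degree E v) = (\<Sum>v\<in>V. n - 4)"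
    using assms(4) by (intro sum.cong) (auto simp: regular_def)
  finally have cE: "2 * card E = n * (n - 4)" using assms(2) by simp
  define d where "d = real n - 4"
  have dpos: "d > 0" using assms(3) d_def by simp
  have m2: "2 * real (card E) = real n * d"
    proof -
    have "real (2 * card E) = real (n * (n - 4))" using cE by simp
    then show ?thesis using assms(3) unfolding d_def by (simp add: of_nat_diff)
  qed
  define k where "k = real (card V')"
  let ?Q = "{p \<in> V' \<times> V'. {fst p, snd p} \<in> E}"
  let ?P = "{p \<in> V' \<times> V'. fst p \<noteq> snd p \<and> {fst p, snd p} \<notin> E}"
  let ?D = "{p \<in> V' \<times> V'. fst p = snd p}"
  define S where "S = (\<Sum>u\<in>V'. \<Sum>v\<in>V'. adj E u v)"
  have "S = (\<Sum>p\<in>V' \<times> V'. if {fst p, snd p} \<in> E then 1 else 0)"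
    unfolding S_def adj_def by (simp add: sum.cartesian_product case_prod_beta)
  also have "\<dots> = real (card ?Q)"
    using fW by (simp add: sum.If_cases Int_def conj_commute)
  finally have SQ: "S = real (card ?Q)" .
  have noloop: "\<And>u. {u, u} \<notin> E" using assms(1) by (auto simp: simple_graph_def)
  have part: "V' \<times> V' = ?Q \<union> ?P \<union> ?D" by auto
  have cD: "card ?D = card V'"
  proof -
    have "?D = (\<lambda>x. (x,x)) ` V'" by auto
    moreover have "inj_on (\<lambda>x. (x,x)) V'" by (auto simp: inj_on_def)
    ultimately show ?thesis by (simp add: card_image)
  qed
  have "card (V' \<times> V') = card (?Q \<union> ?P \<union> ?D)" using part by simp
  also have "\<dots> = card ?Q + card ?P + card ?D"
  proof -
    have f1: "finite (?Q \<union> ?P)" "finite ?D" "finite ?Q" "finite ?P" using fW by auto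
    have "(?Q \<union> ?P) \<inter> ?D = {}" using noloop by auto
    then have "card (?Q \<union> ?P \<union> ?D) = card (?Q \<union> ?P) + card ?D"
      using f1 by (simp add: card_Un_disjoint)
    moreover have "card (?Q \<union> ?P) = card ?Q + card ?P"
      using f1 by (intro card_Un_disjoint) auto
    ultimately show ?thesis by simp
  qed
  finally have cnt: "card V' * card V' = card ?Q + card ?P + card V'"
    using cD by (simp add: card_cartesian_product)
  have nec: "2 * (k - delta_l * real n) \<le> real (card ?P)"
    unfolding k_def
  proof (rule nonedge_count[OF fW])
    fix C assume "C \<subseteq> V'" "\<forall>u\<in>C. \<forall>v\<in>C. u \<noteq> v \<longrightarrow> {u, v} \<in> E"
    then have "clique V E C" using assms(7) by (auto simp: clique_def)
    then show "real (card C) \<le> delta_l * real n" using assms(5) by blast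
  qed
  have Sb: "S = k * k - k - real (card ?P)"
    proof -
    have "real (card V' * card V') = real (card ?Q + card ?P + card V')" using cnt by simp
    then show ?thesis using SQ unfolding k_def by simp
  qed
  have deg: "\<And>u. u \<in> V' \<Longrightarrow> real (degree E u) = d"
    using assms(4,7,3) unfolding regular_def d_def by (auto simp: of_nat_diff)
  have "(\<Sum>u\<in>V'. \<Sum>v\<in>V'. adj E u v - real (degree E u) * real (degree E v) / (2 * real (card E)))
      = (\<Sum>u\<in>V'. \<Sum>v\<in>V'. adj E u v - d * d / (real n * d))"
    using deg m2 by (intro sum.cong) auto
  also have "\<dots> = S - k * k * (d * d / (real n * d))"
    unfolding S_def k_def by (simp add: sum_subtractf)
  finally have modeq: "modularity E V' = (1 / (real n * d)) * (S - k * k * (d * d / (real n * d)))"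
    unfolding modularity_def Let_def using m2 by simp
  have npos: "real n > 0" using assms(3) by simp
  have kt: "k = t * real n" using assms(8) k_def by simp
  have key: "S - k * k * d / real n \<le> (2 * delta_l - 1/2) * real n"
  proof -
    have e1: "k * k * d / real n = k * k - 4 * t * k"
      using kt npos unfolding d_def by (simp add: field_simps)
    have P0: "real (card ?P) \<ge> 0" by simp
    have "-k + 4*t*k - real (card ?P) \<le> (2 * delta_l - 1/2) * real n"
    proof (cases "t \<le> 1/4")
      case True
      have "t * (4*t - 1) \<le> 0" using True assms(9) by (simp add: mult_nonneg_nonpos)
      moreover have "-k + 4*t*k = t * (4*t - 1) * real n" using kt by (simp add: algebra_simps)
      moreover have "t * (4*t - 1) * real n \<le> 0" using calculation(1) npos by (simp add: mult_nonpos_nonneg)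
      ultimately show ?thesis using P0 by (simp add: delta_l_def)
    next
      case False
      have "(4*t - 1) * (t - 1/2) \<le> 0" using False assms(10) by (simp add: mult_nonneg_nonpos)
      then have "4*t*t - 3*t + 1/2 \<le> 0" by (simp add: algebra_simps)
      then have "(4*t*t - 3*t + 1/2) * real n \<le> 0" using npos by (simp add: mult_nonpos_nonneg)
      then show ?thesis using nec kt by (simp add: algebra_simps)
    qed
    then show ?thesis using Sb e1 by simp
  qed
  have "modularity E V' = (S - k * k * d / real n) / (real n * d)"
    using modeq npos dpos by (simp add: field_simps)
  also have "\<dots> \<le> ((2 * delta_l - 1/2) * real n) / (real n * d)"
    using key npos dpos by (intro divide_right_mono) auto
  also have "\<dots> = (2 * delta_l - 1 / 2) / (real n - 4)"
    using npos dpos d_def by simp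
  finally show ?thesis .
qed

end
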